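(* Let $U\subset \mathbb R^n$ and $V\subset \mathbb R^m$ be open and let $f:U\times V\to \mathbb R$ be upper-semicontinuous and bounded. Suppose $f$ is $\kappa$-semiconcave for some $\kappa>0$, i.e. $(x,y)\mapsto f(x,y)-\frac\kappa2(\|x\|^2+\|y\|^2)$ is concave. Then for every $0<\epsilon<\kappa^{-1}$ and every fixed $x\in U$, the function $y\mapsto f^{\epsilon,p}(x,y)-\frac{\kappa}{2} \|y\|^2$ is concave on $V$, where $f^{\epsilon,p}(x,y)= \sup_{z\in U} \{ f(z,y) - \frac{1}{2\epsilon} \| z-x\|^2\}$. *)

theory Defs
  imports "HOL-Analysis.Analysis"
begin

definition upper_semicontinuous_on :: "'a::topological_space set \<Rightarrow> ('a \<Rightarrow> real) \<Rightarrow> bool" where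
  "upper_semicontinuous_on S f \<longleftrightarrow>
     (\<forall>p\<in>S. \<forall>e>0. eventually (\<lambda>q. f q < f p + e) (at p within S))"

definition sup_conv_fst ::
  "real \<Rightarrow> 'a::real_normed_vector set \<Rightarrow> ('a \<times> 'b \<Rightarrow> real) \<Rightarrow> 'a \<Rightarrow> 'b \<Rightarrow> real" where
  "sup_conv_fst eps U f x y = (SUP z\<in>U. f (z, y) - (norm (z - x))\<^sup>2 / (2 * eps))"

end

theory Submission
  imports Defs
begin

lemma sqid:
  fixes a b :: "'a::real_inner" and u v :: real
  assumes "u + v = 1"
  shows "u * (norm a)\<^sup>2 + v * (norm b)\<^sup>2 - (norm (u *\<^sub>R a + v *\<^sub>R b))\<^sup>2 = u * v * (norm (a - b))\<^sup>2"
proof -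
  have v: "v = 1 - u" using assms by simp
  show ?thesis unfolding v power2_norm_eq_inner
    by (simp add: inner_add inner_diff inner_commute algebra_simps power2_eq_square)
qed

theorem lemma4p3:
  fixes U :: "(real ^ 'n) set" and V :: "(real ^ 'm) set"
    and f :: "(real ^ 'n) \<times> (real ^ 'm) \<Rightarrow> real"
    and \<kappa> \<epsilon> :: real and x :: "real ^ 'n"
  assumes "open U" and "open V"
    and "upper_semicontinuous_on (U \<times> V) f"
    and "bounded (f ` (U \<times> V))"
    and "\<kappa> > 0"
    and "concave_on (U \<times> V) (\<lambda>(x, y). f (x, y) - \<kappa> / 2 * ((norm x)\<^sup>2 + (norm y)\<^sup>2))"
    and "0 < \<epsilon>" and "\<epsilon> < 1 / \<kappa>"
    and "x \<in> U"
  shows "concave_on V (\<lambda>y. sup_conv_fst \<epsilon> U f x y - \<kappa> / 2 * (norm y)\<^sup>2)"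
proof -
  define c where "c = \<kappa> / 2"
  define d where "d = 1 / (2 * \<epsilon>)"
  have cd: "c \<le> d" using assms(5,7,8) unfolding c_def d_def
    by (simp add: field_simps)
  have d0: "d > 0" using assms(7) by (simp add: d_def)
  define H where "H z y = f (z, y) - (norm (z - x))\<^sup>2 / (2 * \<epsilon>)" for z y
  define S where "S y = (SUP z\<in>U. H z y)" for y
  have Sdef: "sup_conv_fst \<epsilon> U f x y = S y" for y
    unfolding sup_conv_fst_def S_def H_def by simp
  have conc: "convex (U \<times> V)" and gineq: "\<And>p q u v. p \<in> U \<times> V \<Longrightarrow> q \<in> U \<times> V \<Longrightarrow> u \<ge> 0 \<Longrightarrow> v \<ge> 0 \<Longrightarrow> u + v = 1 \<Longrightarrow>
      u * (\<lambda>(x, y). f (x, y) - \<kappa> / 2 * ((norm x)\<^sup>2 + (norm y)\<^sup>2)) p + v * (\<lambda>(x, y). f (x, y) - \<kappa> / 2 * ((norm x)\<^sup>2 + (norm y)\<^sup>2)) q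
      \<le> (\<lambda>(x, y). f (x, y) - \<kappa> / 2 * ((norm x)\<^sup>2 + (norm y)\<^sup>2)) (u *\<^sub>R p + v *\<^sub>R q)"
    using assms(6) unfolding concave_on_iff by blast+
  have convV: "convex V"
  proof -
    have "V = snd ` (U \<times> V)" using assms(9) by force
    then show ?thesis using convex_linear_image[OF linear_snd conc] by simp
  qed
  obtain B where B: "\<And>p. p \<in> U \<times> V \<Longrightarrow> \<bar>f p\<bar> \<le> B"
    using assms(4) unfolding bounded_iff by auto
  have bdd: "bdd_above ((\<lambda>z. H z y) ` U)" if "y \<in> V" for y
  proof (rule bdd_aboveI2)
    fix z assume "z \<in> U"
    then have "f (z, y) \<le> B" using B[of "(z,y)"] that by auto
    moreover have "(norm (z - x))\<^sup>2 / (2 * \<epsilon>) \<ge> 0" using assms(7) by simp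
    ultimately show "H z y \<le> B" unfolding H_def by linarith
  qed
  have Hle: "H z y \<le> S y" if "z \<in> U" "y \<in> V" for z y
    unfolding S_def using bdd[OF that(2)] that(1) by (rule cSUP_upper2) simp
  have key: "u * H z1 y1 + v * H z2 y2 \<le> H (u *\<^sub>R z1 + v *\<^sub>R z2) (u *\<^sub>R y1 + v *\<^sub>R y2)
      - c * (norm (u *\<^sub>R y1 + v *\<^sub>R y2))\<^sup>2 + u * c * (norm y1)\<^sup>2 + v * c * (norm y2)\<^sup>2"
    if "z1 \<in> U" "z2 \<in> U" "y1 \<in> V" "y2 \<in> V" "u \<ge> 0" "v \<ge> 0" "u + v = 1" for z1 z2 y1 y2 u v
  proof -
    have g: "u * (f (z1, y1) - c * ((norm z1)\<^sup>2 + (norm y1)\<^sup>2)) + v * (f (z2, y2) - c * ((norm z2)\<^sup>2 + (norm y2)\<^sup>2))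
      \<le> f (u *\<^sub>R z1 + v *\<^sub>R z2, u *\<^sub>R y1 + v *\<^sub>R y2) - c * ((norm (u *\<^sub>R z1 + v *\<^sub>R z2))\<^sup>2 + (norm (u *\<^sub>R y1 + v *\<^sub>R y2))\<^sup>2)"
      using gineq[of "(z1,y1)" "(z2,y2)" u v] that unfolding c_def by simp
    have e1: "u * (norm z1)\<^sup>2 + v * (norm z2)\<^sup>2 - (norm (u *\<^sub>R z1 + v *\<^sub>R z2))\<^sup>2 = u * v * (norm (z1 - z2))\<^sup>2"
      using sqid[OF that(7)] .
    have e2: "u * (norm (z1 - x))\<^sup>2 + v * (norm (z2 - x))\<^sup>2 - (norm (u *\<^sub>R (z1 - x) + v *\<^sub>R (z2 - x)))\<^sup>2 = u * v * (norm (z1 - z2))\<^sup>2"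
      using sqid[OF that(7), of "z1 - x" "z2 - x"] by simp
    have e3: "u *\<^sub>R (z1 - x) + v *\<^sub>R (z2 - x) = (u *\<^sub>R z1 + v *\<^sub>R z2) - x"
    proof -
      have "u *\<^sub>R (z1 - x) + v *\<^sub>R (z2 - x) = (u *\<^sub>R z1 + v *\<^sub>R z2) - (u + v) *\<^sub>R x"
        by (simp add: algebra_simps)
      then show ?thesis using that(7) by simp
    qed
    have uv: "u * v * (norm (z1 - z2))\<^sup>2 \<ge> 0" using that by simp
    have m: "c * (u * v * (norm (z1 - z2))\<^sup>2) \<le> d * (u * v * (norm (z1 - z2))\<^sup>2)"
      using mult_right_mono[OF cd uv] .
    have hd: "(norm z)\<^sup>2 / (2 * \<epsilon>) = d * (norm z)\<^sup>2" for z :: "real ^ 'n"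
      by (simp add: d_def)
    have e2': "u * (norm (z1 - x))\<^sup>2 + v * (norm (z2 - x))\<^sup>2 - (norm ((u *\<^sub>R z1 + v *\<^sub>R z2) - x))\<^sup>2 = u * v * (norm (z1 - z2))\<^sup>2"
      using e2 unfolding e3 .
    have c1: "c * u * (norm z1)\<^sup>2 + c * v * (norm z2)\<^sup>2 - c * (norm (u *\<^sub>R z1 + v *\<^sub>R z2))\<^sup>2 = c * (u * v * (norm (z1 - z2))\<^sup>2)"
      using arg_cong[OF e1, of "\<lambda>t. c * t"] by (simp add: algebra_simps)
    have d1: "d * u * (norm (z1 - x))\<^sup>2 + d * v * (norm (z2 - x))\<^sup>2 - d * (norm ((u *\<^sub>R z1 + v *\<^sub>R z2) - x))\<^sup>2 = d * (u * v * (norm (z1 - z2))\<^sup>2)"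
      using arg_cong[OF e2', of "\<lambda>t. d * t"] by (simp add: algebra_simps)
    have g': "u * f (z1, y1) + v * f (z2, y2) - c * u * (norm z1)\<^sup>2 - c * u * (norm y1)\<^sup>2 - c * v * (norm z2)\<^sup>2 - c * v * (norm y2)\<^sup>2
      \<le> f (u *\<^sub>R z1 + v *\<^sub>R z2, u *\<^sub>R y1 + v *\<^sub>R y2) - c * (norm (u *\<^sub>R z1 + v *\<^sub>R z2))\<^sup>2 - c * (norm (u *\<^sub>R y1 + v *\<^sub>R y2))\<^sup>2"
      using g by (simp add: algebra_simps)
    have goal: "u * f (z1, y1) - d * u * (norm (z1 - x))\<^sup>2 + v * f (z2, y2) - d * v * (norm (z2 - x))\<^sup>2
      \<le> f (u *\<^sub>R z1 + v *\<^sub>R z2, u *\<^sub>R y1 + v *\<^sub>R y2) - d * (norm ((u *\<^sub>R z1 + v *\<^sub>R z2) - x))\<^sup>2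
       - c * (norm (u *\<^sub>R y1 + v *\<^sub>R y2))\<^sup>2 + c * u * (norm y1)\<^sup>2 + c * v * (norm y2)\<^sup>2"
      using g' c1 d1 m by linarith
    show ?thesis unfolding H_def hd using goal by (simp add: algebra_simps)
  qed
  show ?thesis unfolding concave_on_iff Sdef
  proof (intro conjI convV ballI allI impI)
    fix y1 y2 u v assume y: "y1 \<in> V" "y2 \<in> V" and uv: "0 \<le> (u::real)" "0 \<le> (v::real)" "u + v = 1"
    define yu where "yu = u *\<^sub>R y1 + v *\<^sub>R y2"
    have yuV: "yu \<in> V" using convV y uv unfolding yu_def convex_def by blast
    define R where "R = S yu - c * (norm yu)\<^sup>2 + u * c * (norm y1)\<^sup>2 + v * c * (norm y2)\<^sup>2"
    have pt: "u * H z1 y1 + v * H z2 y2 \<le> R" if "z1 \<in> U" "z2 \<in> U" for z1 z2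
    proof -
      have zu: "u *\<^sub>R z1 + v *\<^sub>R z2 \<in> U"
        using convex_linear_image[OF linear_fst conc] \<open>y1 \<in> V\<close> that uv
        unfolding convex_def by (metis fst_image_times empty_iff)
      show ?thesis using key[OF that y uv] Hle[OF zu yuV] unfolding R_def yu_def by linarith
    qed
    have Ne: "U \<noteq> {}" using assms(9) by auto
    have "u * S y1 + v * S y2 \<le> R"
    proof (cases "u = 0")
      case True
      then have "v = 1" using uv by simp
      then show ?thesis using True unfolding R_def yu_def by simp
    next
      case u0: False
      show ?thesis
      proof (cases "v = 0")
        case True
        then have "u = 1" using uv by simp
        then show ?thesis using True unfolding R_def yu_def by simp
      next
        case v0: False
        have up: "u > 0" "v > 0" using u0 v0 uv by auto
        have A: "H z2 y2 \<le> (R - u * S y1) / v" if "z2 \<in> U" for z2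
        proof -
          have "S y1 \<le> (R - v * H z2 y2) / u"
            unfolding S_def
          proof (rule cSUP_least[OF Ne])
            fix z1 assume "z1 \<in> U"
            then show "H z1 y1 \<le> (R - v * H z2 y2) / u"
              using pt[OF _ that] up by (simp add: field_simps)
          qed
          then show ?thesis using up by (simp add: field_simps)
        qed
        have "S y2 \<le> (R - u * S y1) / v"
          unfolding S_def by (rule cSUP_least[OF Ne]) (rule A[unfolded S_def])
        then show ?thesis using up by (simp add: field_simps)
      qed
    qed
    then show "u * (S y1 - \<kappa> / 2 * (norm y1)\<^sup>2) + v * (S y2 - \<kappa> / 2 * (norm y2)\<^sup>2)
         \<le> S (u *\<^sub>R y1 + v *\<^sub>R y2) - \<kappa> / 2 * (norm (u *\<^sub>R y1 + v *\<^sub>R y2))\<^sup>2"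
      unfolding R_def yu_def c_def by (simp add: algebra_simps)
  qed
qed

end
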